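(* Let $P,Q\in\Gamma_n$ and $0<r\le R$ with $r\le p_i/q_i\le R$ for all $i$. Let $s,t\in\mathbb{R}$ with $0\le s\le4$. If $s\ge t$ and $s(t-s+6)\ge4(1+t)$, then $$\Big(\frac{r+1}{2}\Big)^{s-t-1}(sr+4-s)\,\Omega_t(Q\|P)\le\zeta_s(P\|Q)\le\Big(\frac{R+1}{2}\Big)^{s-t-1}(sR+4-s)\,\Omega_t(Q\|P).$$ If $s\le t$ and $s(t-s+6)\le4(1+t)$, then $$\Big(\frac{R+1}{2}\Big)^{s-t-1}(sR+4-s)\,\Omega_t(Q\|P)\le\zeta_s(P\|Q)\le\Big(\frac{r+1}{2}\Big)^{s-t-1}(sr+4-s)\,\Omega_t(Q\|P).$$
   Context: $\Gamma_n=\{P=(p_1,\dots,p_n): p_i>0,\ \sum_i p_i=1\}$, $n\ge2$. For $P,Q\in\Gamma_n$ and $s\in\mathbb{R}$: $\Omega_s(Q\|P)=[s(s-1)]^{-1}\big[\sum_i q_i\big(\frac{p_i+q_i}{2q_i}\big)^s-1\big]$ for $s\ne0,1$; $\Omega_0(Q\|P)=\sum_i q_i\ln\frac{2q_i}{p_i+q_i}$; $\Omega_1(Q\|P)=\sum_i\frac{p_i+q_i}{2}\ln\frac{p_i+q_i}{2q_i}$. $\zeta_s(P\|Q)=(s-1)^{-1}\sum_i(p_i-q_i)\big(\frac{p_i+q_i}{2q_i}\big)^{s-1}$ for $s\ne1$; $\zeta_1(P\|Q)=\sum_i(p_i-q_i)\ln\frac{p_i+q_i}{2q_i}$. *)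

theory Defs
  imports "HOL-Analysis.Analysis"
begin

definition Gamma :: "nat \<Rightarrow> (nat \<Rightarrow> real) set" where
  "Gamma n = {p. (\<forall>i<n. p i > 0) \<and> (\<Sum>i<n. p i) = 1}"

text \<open>Omega_s(Q||P); note the argument order: first argument Q, second P.\<close>
definition Omega :: "nat \<Rightarrow> real \<Rightarrow> (nat \<Rightarrow> real) \<Rightarrow> (nat \<Rightarrow> real) \<Rightarrow> real" where
  "Omega n s q p =
    (if s = 0 then (\<Sum>i<n. q i * ln (2 * q i / (p i + q i)))
     else if s = 1 then (\<Sum>i<n. (p i + q i) / 2 * ln ((p i + q i) / (2 * q i)))
     else ((\<Sum>i<n. q i * ((p i + q i) / (2 * q i)) powr s) - 1) / (s * (s - 1)))"

definition zeta :: "nat \<Rightarrow> real \<Rightarrow> (nat \<Rightarrow> real) \<Rightarrow> (nat \<Rightarrow> real) \<Rightarrow> real" where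
  "zeta n s p q =
    (if s = 1 then (\<Sum>i<n. (p i - q i) * ln ((p i + q i) / (2 * q i)))
     else (\<Sum>i<n. (p i - q i) * ((p i + q i) / (2 * q i)) powr (s - 1)) / (s - 1))"

end

theory Submission
  imports Defs
begin


lemma taylor_tangent:
  fixes F F' F'' :: "real \<Rightarrow> real" and r R y :: real
  assumes "r \<le> 1" "1 \<le> R"
    and d1: "\<And>x. r \<le> x \<Longrightarrow> x \<le> R \<Longrightarrow> (F has_real_derivative F' x) (at x)"
    and d2: "\<And>x. r \<le> x \<Longrightarrow> x \<le> R \<Longrightarrow> (F' has_real_derivative F'' x) (at x)"
    and pos: "\<And>x. r \<le> x \<Longrightarrow> x \<le> R \<Longrightarrow> F'' x \<ge> 0"
    and y: "r \<le> y" "y \<le> R"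
  shows "F y \<ge> F 1 + F' 1 * (y - 1)"
proof (cases "y = 1")
  case True then show ?thesis by simp
next
  case False
  define diff where "diff = (\<lambda>m::nat. if m = 0 then F else if m = 1 then F' else F'')"
  have "\<exists>t. (if y < 1 then y < t \<and> t < 1 else 1 < t \<and> t < y) \<and>
    F y = (\<Sum>m<2. (diff m 1 / fact m) * (y - 1)^m) + (diff 2 t / fact 2) * (y - 1)^2"
    by (rule Taylor[where a=r and b=R]) (use assms False in \<open>auto simp: diff_def less_2_cases_iff\<close>)
  then obtain t where t: "(if y < 1 then y < t \<and> t < 1 else 1 < t \<and> t < y)"
    and eq: "F y = (\<Sum>m<2. (diff m 1 / fact m) * (y - 1)^m) + (diff 2 t / fact 2) * (y - 1)^2"
    by blast
  have tr: "r \<le> t" "t \<le> R" using t y assms by (auto split: if_splits)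
  have "F'' t \<ge> 0" using pos tr by blast
  then have "(diff 2 t / fact 2) * (y - 1)^2 \<ge> 0" by (simp add: diff_def)
  moreover have "(\<Sum>m<2. (diff m 1 / fact m) * (y - 1)^m) = F 1 + F' 1 * (y - 1)"
    by (simp add: diff_def eval_nat_numeral)
  ultimately show ?thesis using eq by linarith
qed

definition phi :: "real \<Rightarrow> real \<Rightarrow> real" where
  "phi t x = (if t = 0 then - ln ((x+1)/2) else if t = 1 then (x+1)/2 * ln ((x+1)/2)
     else (((x+1)/2) powr t - 1) / (t * (t - 1)))"
definition phi1 :: "real \<Rightarrow> real \<Rightarrow> real" where
  "phi1 t x = (if t = 0 then - 1/(x+1) else if t = 1 then (ln ((x+1)/2) + 1)/2
     else ((x+1)/2) powr (t-1) / (2*(t - 1)))"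
definition psi :: "real \<Rightarrow> real \<Rightarrow> real" where
  "psi s x = (if s = 1 then (x-1) * ln ((x+1)/2) else (x-1) * ((x+1)/2) powr (s-1) / (s-1))"
definition psi1 :: "real \<Rightarrow> real \<Rightarrow> real" where
  "psi1 s x = (if s = 1 then ln ((x+1)/2) + (x-1)/(x+1)
     else ((x+1)/2) powr (s-1) / (s-1) + (x-1) * ((x+1)/2) powr (s-2) / 2)"

lemma phi_d1: assumes "x > 0" shows "(phi t has_real_derivative phi1 t x) (at x)"
proof -
  have u: "(x+1)/2 > 0" using assms by simp
  show ?thesis
  proof (cases "t = 0")
    case True then show ?thesis unfolding phi_def[abs_def] phi1_def using u
      apply simp
      apply (rule derivative_eq_intros refl | simp)+
      using assms by (simp add: field_simps)
  next
    case f0: False show ?thesis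
    proof (cases "t = 1")
      case True then show ?thesis unfolding phi_def[abs_def] phi1_def using u
      apply simp
      apply (rule derivative_eq_intros refl | simp)+
      using assms by (simp add: field_simps)
    next
      case False
      then show ?thesis unfolding phi_def[abs_def] phi1_def using u f0
      apply simp
      apply (rule derivative_eq_intros refl | simp)+
      done
    qed
  qed
qed

lemma phi_d2: assumes "x > 0" shows "(phi1 t has_real_derivative ((x+1)/2) powr (t-2) / 4) (at x)"
proof -
  have u: "(x+1)/2 > 0" using assms by simp
  show ?thesis
  proof (cases "t = 0")
    case True then show ?thesis unfolding phi1_def[abs_def] using u
      apply simp
      apply (rule derivative_eq_intros refl | simp)+
      using assms by (simp add: field_simps powr_minus power2_eq_square)
  next
    case f0: False show ?thesis
    proof (cases "t = 1")
      case True then show ?thesis unfolding phi1_def[abs_def] using u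
      apply simp
      apply (rule derivative_eq_intros refl | simp)+
      using assms by (simp add: field_simps powr_minus)
    next
      case False
      then show ?thesis unfolding phi1_def[abs_def] using u f0
      apply simp
      apply (rule derivative_eq_intros refl | simp)+
      using assms by (simp add: field_simps powr_diff)
    qed
  qed
qed

lemma powr_shift: "(u::real) > 0 \<Longrightarrow> u powr (a + 1) = u powr a * u"
  by (simp add: powr_add)

lemma psi_d1: assumes "x > 0" shows "(psi s has_real_derivative psi1 s x) (at x)"
proof -
  have u: "(x+1)/2 > 0" using assms by simp
  show ?thesis
  proof (cases "s = 1")
    case True then show ?thesis unfolding psi_def[abs_def] psi1_def using u
      apply simp
      apply (rule derivative_eq_intros refl | simp)+
      using assms by (simp add: field_simps)
  next
    case False
    have e: "((x+1)/2) powr (s-1) = ((x+1)/2) powr (s-2) * ((x+1)/2)"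
      using powr_shift[OF u, of "s-2"] by simp
    have s1: "s - 1 \<noteq> 0" using False by simp
    show ?thesis unfolding psi_def[abs_def] psi1_def using u False
      apply simp
      apply (rule derivative_eq_intros refl | simp)+
      unfolding e using assms s1 by (simp add: field_simps)
  qed
qed

lemma psi_d2: assumes "x > 0"
  shows "(psi1 s has_real_derivative ((x+1)/2) powr (s-3) * (s*x+4-s) / 4) (at x)"
proof -
  have u: "(x+1)/2 > 0" using assms by simp
  show ?thesis
  proof (cases "s = 1")
    case True then show ?thesis unfolding psi1_def[abs_def] using u
      apply simp
      apply (rule derivative_eq_intros refl | simp)+
      using assms apply (simp add: field_simps powr_minus power2_eq_square)
      proof -
        have xx: "0 < x*x" using assms by simp
        have d: "1 + (x*x + x*2) \<noteq> 0" using assms xx by linarith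
        show "8 + (16 + x * 16) / (1 + (x * x + x * 2)) = (24 + (x * (x * 8) + x * 32)) / (1 + (x * x + x * 2))"
          using d by (simp add: divide_simps)
      qed
  next
    case False
    have e: "((x+1)/2) powr (s-2) = ((x+1)/2) powr (s-3) * ((x+1)/2)"
      using powr_shift[OF u, of "s-3"] by simp
    have s1: "s - 1 \<noteq> 0" using False by simp
    show ?thesis unfolding psi1_def[abs_def] using u False
      apply simp
      apply (rule derivative_eq_intros refl | simp)+
      unfolding e using assms s1 by (simp add: field_simps)
  qed
qed

definition gg :: "real \<Rightarrow> real \<Rightarrow> real \<Rightarrow> real" where
  "gg s t x = ((x+1)/2) powr (s-t-1) * (s*x+4-s)"

lemma gg_d: assumes "x > 0"
  shows "(gg s t has_real_derivative
     ((x+1)/2) powr (s-t-2) / 2 * (s*(s-t)*x + (s*(t-s+6) - 4*(1+t)))) (at x)"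
proof -
  have u: "(x+1)/2 > 0" using assms by simp
  have e: "((x+1)/2) powr (s-t-1) = ((x+1)/2) powr (s-t-2) * ((x+1)/2)"
    using powr_add[of "(x+1)/2" "s-t-2" 1] u by simp
  have e2: "s-t-1-1 = s-t-2" by simp
  have alg: "\<And>A. (s - t - 1) * A * (((1 + 0) * 2 - (x + 1) * 0) / (2 * 2)) * (s * x + 4 - s) +
     (0 * x + 1 * s + 0 - 0) * (A * ((x + 1) / 2)) = A / 2 * (s * (s - t) * x + (s * (t - s + 6) - 4 * (1 + t)))"
    by (simp add: field_simps)
  have ?thesis unfolding gg_def[abs_def]
  apply (rule derivative_eq_intros refl)+
  using u apply simp
  apply (rule derivative_eq_intros refl)+
  apply simp
  apply (rule derivative_eq_intros refl)+
  apply (simp only: e e2)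
  apply (rule alg)
  done
  then show ?thesis .
qed

lemma gg_mono:
  assumes "0 < a" "a \<le> b" "0 \<le> s" "t \<le> s" "s * (t - s + 6) \<ge> 4 * (1 + t)"
  shows "gg s t a \<le> gg s t b"
proof (rule DERIV_nonneg_imp_increasing_open[OF assms(2)])
  fix x assume x: "a < x" "x < b"
  have "s*(s-t)*x \<ge> 0" using assms x by simp
  then have "((x+1)/2) powr (s-t-2) / 2 * (s*(s-t)*x + (s*(t-s+6) - 4*(1+t))) \<ge> 0"
    using assms by simp
  moreover have "(gg s t has_real_derivative
     ((x+1)/2) powr (s-t-2) / 2 * (s*(s-t)*x + (s*(t-s+6) - 4*(1+t)))) (at x)"
    using gg_d[of x s t] x assms by simp
  ultimately show "\<exists>y. (gg s t has_real_derivative y) (at x) \<and> 0 \<le> y" by blast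
next
  show "continuous_on {a..b} (gg s t)"
    by (rule has_real_derivative_imp_continuous_on[OF gg_d]) (use assms in auto)
qed

lemma gg_anti:
  assumes "0 < a" "a \<le> b" "0 \<le> s" "s \<le> t" "s * (t - s + 6) \<le> 4 * (1 + t)"
  shows "gg s t b \<le> gg s t a"
proof (rule DERIV_nonpos_imp_decreasing_open[OF assms(2)])
  fix x assume x: "a < x" "x < b"
  have "s*(s-t)*x \<le> 0" using assms x by (simp add: mult_nonneg_nonpos mult_nonpos_nonneg)
  then have "((x+1)/2) powr (s-t-2) / 2 * (s*(s-t)*x + (s*(t-s+6) - 4*(1+t))) \<le> 0"
    using assms by (intro mult_nonneg_nonpos) auto
  moreover have "(gg s t has_real_derivative
     ((x+1)/2) powr (s-t-2) / 2 * (s*(s-t)*x + (s*(t-s+6) - 4*(1+t)))) (at x)"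
    using gg_d[of x s t] x assms by simp
  ultimately show "\<exists>y. (gg s t has_real_derivative y) (at x) \<and> y \<le> 0" by blast
next
  show "continuous_on {a..b} (gg s t)"
    by (rule has_real_derivative_imp_continuous_on[OF gg_d]) (use assms in auto)
qed

lemma sum_tangent:
  fixes F F' F'' :: "real \<Rightarrow> real"
  assumes "r \<le> 1" "1 \<le> R"
    and d1: "\<And>x. r \<le> x \<Longrightarrow> x \<le> R \<Longrightarrow> (F has_real_derivative F' x) (at x)"
    and d2: "\<And>x. r \<le> x \<Longrightarrow> x \<le> R \<Longrightarrow> (F' has_real_derivative F'' x) (at x)"
    and pos: "\<And>x. r \<le> x \<Longrightarrow> x \<le> R \<Longrightarrow> F'' x \<ge> 0"
    and F1: "F 1 = 0"
    and qp: "\<forall>i<n. q i > 0" and sp: "(\<Sum>i<n. p i) = (\<Sum>i<n. q i)"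
    and xr: "\<forall>i<n. r \<le> p i / q i \<and> p i / q i \<le> R"
  shows "(\<Sum>i<n. q i * F (p i / q i)) \<ge> 0"
proof -
  have "(\<Sum>i<n. q i * F (p i / q i)) \<ge> (\<Sum>i<n. q i * (F 1 + F' 1 * (p i / q i - 1)))"
  proof (rule sum_mono)
    fix i assume "i \<in> {..<n}"
    then have "q i > 0" "r \<le> p i / q i" "p i / q i \<le> R" using qp xr by auto
    then show "q i * (F 1 + F' 1 * (p i / q i - 1)) \<le> q i * F (p i / q i)"
      using taylor_tangent[OF assms(1,2) d1 d2 pos] by (simp add: mult_left_mono)
  qed
  also have "(\<Sum>i<n. q i * (F 1 + F' 1 * (p i / q i - 1))) = F' 1 * (\<Sum>i<n. (p i - q i))"
    unfolding F1 sum_distrib_left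
    by (rule sum.cong) (use qp in \<open>auto simp: field_simps\<close>)
  also have "\<dots> = 0" using sp by (simp add: sum_subtractf)
  finally show ?thesis .
qed


lemma frac_eq: "(q::real) > 0 \<Longrightarrow> (p + q) / (2 * q) = (p / q + 1) / 2"
  by (simp add: field_simps)

lemma zeta_eq:
  assumes "\<forall>i<n. q i > 0"
  shows "zeta n s p q = (\<Sum>i<n. q i * psi s (p i / q i))"
proof (cases "s = 1")
  case True
  show ?thesis unfolding zeta_def psi_def using True
    by (simp, intro sum.cong) (use assms in \<open>auto simp: frac_eq field_simps\<close>)
next
  case False
  show ?thesis unfolding zeta_def psi_def using False
    by (simp add: sum_divide_distrib, intro sum.cong) (use assms in \<open>auto simp: frac_eq field_simps\<close>)
qed

lemma Omega_eq:
  assumes "\<forall>i<n. q i > 0" "\<forall>i<n. p i > 0" "(\<Sum>i<n. q i) = 1"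
  shows "Omega n t q p = (\<Sum>i<n. q i * phi t (p i / q i))"
proof -
  consider "t = 0" | "t = 1" | "t \<noteq> 0" "t \<noteq> 1" by blast
  then show ?thesis
  proof cases
    case 1
    show ?thesis unfolding Omega_def phi_def using 1
    proof (simp, intro sum.cong refl)
      fix i assume "i \<in> {..<n}"
      then have qi: "q i > 0" "p i > 0" using assms by auto
      have "ln (2 * q i / (p i + q i)) = - ln ((p i + q i) / (2 * q i))"
        using qi by (simp add: ln_div)
      then show "q i * ln (2 * q i / (p i + q i)) = - (q i * ln ((p i / q i + 1) / 2))"
        using qi by (simp add: frac_eq)
    qed
  next
    case 2
    show ?thesis unfolding Omega_def phi_def using 2
      by (simp, intro sum.cong) (use assms in \<open>auto simp: frac_eq field_simps\<close>)
  next
    case 3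
    have "(\<Sum>i<n. q i * ((p i + q i) / (2 * q i)) powr t) - 1
        = (\<Sum>i<n. q i * (((p i / q i + 1) / 2) powr t - 1))"
      using assms by (simp add: right_diff_distrib sum_subtractf frac_eq)
    then show ?thesis unfolding Omega_def phi_def using 3
      by (simp add: sum_divide_distrib)
  qed
qed

lemma ratio_range:
  fixes n :: nat and p q :: "nat \<Rightarrow> real" and r R :: real
  assumes "n \<ge> 1" "\<forall>i<n. q i > 0" "(\<Sum>i<n. p i) = (\<Sum>i<n. q i)"
    and "\<forall>i<n. r \<le> p i / q i \<and> p i / q i \<le> R"
  shows "r \<le> 1" "1 \<le> R"
proof -
  have "(0::nat) \<in> {..<n}" using assms(1) by simp
  then have ne: "{..<n} \<noteq> {}" by blast
  have "\<exists>i<n. p i \<le> q i"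
  proof (rule ccontr)
    assume "\<not> ?thesis"
    then have "(\<Sum>i<n. q i) < (\<Sum>i<n. p i)"
      by (intro sum_strict_mono ne) auto
    then show False using assms by simp
  qed
  then obtain i where "i < n" "p i \<le> q i" by blast
  then show "r \<le> 1" using assms(2,4) by (metis divide_le_eq_1_pos order.trans)
  have "\<exists>i<n. q i \<le> p i"
  proof (rule ccontr)
    assume "\<not> ?thesis"
    then have "(\<Sum>i<n. p i) < (\<Sum>i<n. q i)"
      by (intro sum_strict_mono ne) auto
    then show False using assms by simp
  qed
  then obtain j where "j < n" "q j \<le> p j" by blast
  then show "1 \<le> R" using assms(2,4) by (metis le_divide_eq_1_pos order.trans)
qed

lemma second_rel:
  assumes "x > 0"
  shows "((x+1)/2) powr (s-3) * (s*x+4-s) / 4 = ((x+1)/2) powr (t-2) / 4 * gg s t x"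
proof -
  have "((x+1)/2) powr (s-3) = ((x+1)/2) powr (t-2) * ((x+1)/2) powr (s-t-1)"
    using assms by (simp add: powr_add[symmetric])
  then show ?thesis unfolding gg_def by simp
qed

lemma lower_bound:
  assumes "0 < r" "r \<le> 1" "1 \<le> R"
    and qp: "\<forall>i<n. q i > 0" "\<forall>i<n. p i > 0" "(\<Sum>i<n. q i) = 1" "(\<Sum>i<n. p i) = 1"
    and xr: "\<forall>i<n. r \<le> p i / q i \<and> p i / q i \<le> R"
    and m: "\<And>x. r \<le> x \<Longrightarrow> x \<le> R \<Longrightarrow> m \<le> gg s t x"
  shows "m * Omega n t q p \<le> zeta n s p q"
proof -
  define F where "F x = psi s x - m * phi t x" for x
  have "(\<Sum>i<n. q i * F (p i / q i)) \<ge> 0"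
  proof (rule sum_tangent[where r=r and R=R and F' = "\<lambda>x. psi1 s x - m * phi1 t x"
        and F'' = "\<lambda>x. ((x+1)/2) powr (s-3) * (s*x+4-s) / 4 - m * (((x+1)/2) powr (t-2) / 4)"])
    fix x assume x: "r \<le> x" "x \<le> R"
    then have x0: "x > 0" using assms by simp
    show "(F has_real_derivative psi1 s x - m * phi1 t x) (at x)"
      unfolding F_def[abs_def] by (intro DERIV_diff DERIV_cmult psi_d1 phi_d1 x0)
    show "((\<lambda>x. psi1 s x - m * phi1 t x) has_real_derivative
       ((x+1)/2) powr (s-3) * (s*x+4-s) / 4 - m * (((x+1)/2) powr (t-2) / 4)) (at x)"
      by (intro DERIV_diff DERIV_cmult psi_d2 phi_d2 x0)
    have "m \<le> gg s t x" using m x by blast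
    then have "0 \<le> ((x+1)/2) powr (t-2) / 4 * (gg s t x - m)"
      by simp
    also have "\<dots> = ((x+1)/2) powr (s-3) * (s*x+4-s) / 4 - m * (((x+1)/2) powr (t-2) / 4)"
      by (subst second_rel[OF x0, of s t]) (simp add: field_simps)
    finally show "0 \<le> ((x+1)/2) powr (s-3) * (s*x+4-s) / 4 - m * (((x+1)/2) powr (t-2) / 4)" .
  next
    show "F 1 = 0" unfolding F_def psi_def phi_def by simp
  qed (use assms in auto)
  also have "(\<Sum>i<n. q i * F (p i / q i)) = zeta n s p q - m * Omega n t q p"
    unfolding zeta_eq[OF qp(1)] Omega_eq[OF qp(1,2,3)] F_def
    by (simp add: sum_distrib_left right_diff_distrib sum_subtractf algebra_simps)
  finally show ?thesis by simp
qed

lemma upper_bound: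
  assumes "0 < r" "r \<le> 1" "1 \<le> R"
    and qp: "\<forall>i<n. q i > 0" "\<forall>i<n. p i > 0" "(\<Sum>i<n. q i) = 1" "(\<Sum>i<n. p i) = 1"
    and xr: "\<forall>i<n. r \<le> p i / q i \<and> p i / q i \<le> R"
    and m: "\<And>x. r \<le> x \<Longrightarrow> x \<le> R \<Longrightarrow> gg s t x \<le> m"
  shows "zeta n s p q \<le> m * Omega n t q p"
proof -
  define F where "F x = m * phi t x - psi s x" for x
  have "(\<Sum>i<n. q i * F (p i / q i)) \<ge> 0"
  proof (rule sum_tangent[where r=r and R=R and F' = "\<lambda>x. m * phi1 t x - psi1 s x"
        and F'' = "\<lambda>x. m * (((x+1)/2) powr (t-2) / 4) - ((x+1)/2) powr (s-3) * (s*x+4-s) / 4"])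
    fix x assume x: "r \<le> x" "x \<le> R"
    then have x0: "x > 0" using assms by simp
    show "(F has_real_derivative m * phi1 t x - psi1 s x) (at x)"
      unfolding F_def[abs_def] by (intro DERIV_diff DERIV_cmult psi_d1 phi_d1 x0)
    show "((\<lambda>x. m * phi1 t x - psi1 s x) has_real_derivative
       m * (((x+1)/2) powr (t-2) / 4) - ((x+1)/2) powr (s-3) * (s*x+4-s) / 4) (at x)"
      by (intro DERIV_diff DERIV_cmult psi_d2 phi_d2 x0)
    have "gg s t x \<le> m" using m x by blast
    then have "0 \<le> ((x+1)/2) powr (t-2) / 4 * (m - gg s t x)"
      by simp
    also have "\<dots> = m * (((x+1)/2) powr (t-2) / 4) - ((x+1)/2) powr (s-3) * (s*x+4-s) / 4"
      by (subst second_rel[OF x0, of s t]) (simp add: field_simps)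
    finally show "0 \<le> m * (((x+1)/2) powr (t-2) / 4) - ((x+1)/2) powr (s-3) * (s*x+4-s) / 4" .
  next
    show "F 1 = 0" unfolding F_def psi_def phi_def by simp
  qed (use assms in auto)
  also have "(\<Sum>i<n. q i * F (p i / q i)) = m * Omega n t q p - zeta n s p q"
    unfolding zeta_eq[OF qp(1)] Omega_eq[OF qp(1,2,3)] F_def
    by (simp add: sum_distrib_left right_diff_distrib sum_subtractf algebra_simps)
  finally show ?thesis by simp
qed


theorem theorem4p1:
  fixes n :: nat and p q :: "nat \<Rightarrow> real" and r R s t :: real
  assumes "n \<ge> 2"
    and "p \<in> Gamma n" and "q \<in> Gamma n"
    and "0 < r" and "r \<le> R"
    and "\<forall>i<n. r \<le> p i / q i \<and> p i / q i \<le> R"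
    and "0 \<le> s" and "s \<le> 4"
  shows "(s \<ge> t \<and> s * (t - s + 6) \<ge> 4 * (1 + t) \<longrightarrow>
           ((r + 1) / 2) powr (s - t - 1) * (s * r + 4 - s) * Omega n t q p \<le> zeta n s p q \<and>
           zeta n s p q \<le> ((R + 1) / 2) powr (s - t - 1) * (s * R + 4 - s) * Omega n t q p)
       \<and> (s \<le> t \<and> s * (t - s + 6) \<le> 4 * (1 + t) \<longrightarrow>
           ((R + 1) / 2) powr (s - t - 1) * (s * R + 4 - s) * Omega n t q p \<le> zeta n s p q \<and>
           zeta n s p q \<le> ((r + 1) / 2) powr (s - t - 1) * (s * r + 4 - s) * Omega n t q p)"
proof -
  have qp: "\<forall>i<n. q i > 0" "\<forall>i<n. p i > 0" "(\<Sum>i<n. q i) = 1" "(\<Sum>i<n. p i) = 1"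
    using assms(2,3) unfolding Gamma_def by auto
  have r1: "r \<le> 1" and R1: "1 \<le> R"
    using ratio_range[of n q p r R] assms(1,6) qp by auto
  have gr: "gg s t r = ((r + 1) / 2) powr (s - t - 1) * (s * r + 4 - s)"
    and gR: "gg s t R = ((R + 1) / 2) powr (s - t - 1) * (s * R + 4 - s)"
    by (simp_all add: gg_def)
  have A: "((r + 1) / 2) powr (s - t - 1) * (s * r + 4 - s) * Omega n t q p \<le> zeta n s p q \<and>
           zeta n s p q \<le> ((R + 1) / 2) powr (s - t - 1) * (s * R + 4 - s) * Omega n t q p"
    if c1: "s \<ge> t" and c2: "s * (t - s + 6) \<ge> 4 * (1 + t)"
  proof -
    have m1: "gg s t r \<le> gg s t x" if "r \<le> x" "x \<le> R" for x
      using gg_mono[OF assms(4) that(1) assms(7) c1 c2] .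
    have m2: "gg s t x \<le> gg s t R" if "r \<le> x" "x \<le> R" for x
    proof -
      have "0 < x" using that assms(4) by linarith
      then show ?thesis using gg_mono[of x R s t] that(2) assms(7) c1 c2 by blast
    qed
    have l: "gg s t r * Omega n t q p \<le> zeta n s p q"
      using lower_bound[OF assms(4) r1 R1 qp assms(6), of "gg s t r" s t] m1 by blast
    have u: "zeta n s p q \<le> gg s t R * Omega n t q p"
      using upper_bound[OF assms(4) r1 R1 qp assms(6), of s t "gg s t R"] m2 by blast
    show ?thesis using l u unfolding gr gR by blast
  qed
  have B: "((R + 1) / 2) powr (s - t - 1) * (s * R + 4 - s) * Omega n t q p \<le> zeta n s p q \<and>
           zeta n s p q \<le> ((r + 1) / 2) powr (s - t - 1) * (s * r + 4 - s) * Omega n t q p"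
    if c1: "s \<le> t" and c2: "s * (t - s + 6) \<le> 4 * (1 + t)"
  proof -
    have m1: "gg s t x \<le> gg s t r" if "r \<le> x" "x \<le> R" for x
      using gg_anti[OF assms(4) that(1) assms(7) c1 c2] .
    have m2: "gg s t R \<le> gg s t x" if "r \<le> x" "x \<le> R" for x
    proof -
      have "0 < x" using that assms(4) by linarith
      then show ?thesis using gg_anti[of x R s t] that(2) assms(7) c1 c2 by blast
    qed
    have l: "gg s t R * Omega n t q p \<le> zeta n s p q"
      using lower_bound[OF assms(4) r1 R1 qp assms(6), of "gg s t R" s t] m2 by blast
    have u: "zeta n s p q \<le> gg s t r * Omega n t q p"
      using upper_bound[OF assms(4) r1 R1 qp assms(6), of s t "gg s t r"] m1 by blast
    show ?thesis using l u unfolding gr gR by blast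
  qed
  show ?thesis using A B by blast
qed

end
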